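(* Let $k\ge2$, $n\ge1$ be integers, let $\bar{\mathcal{P}}\in\mathbb{R}^{[k,n]}$ be a columnwise-substochastic tensor, $\mathbf{v}\in\mathbb{R}^n$ a stochastic vector and $\alpha\in[0,1)$ with $\varsigma:=(2k-3)\alpha(1-\alpha)^{-\frac{k-2}{k-1}}<1$. Choose $\mathbf{y}_0\in\mathbb{R}^n_+$ with $\mathbf{e}^T\mathbf{y}_0\le(1-\alpha)^{-\frac{1}{k-1}}$ and define iteratively, for $c=0,1,2,\dots$, $\mathbf{z}_c:=\alpha\bar{\mathcal{P}}\mathbf{y}_c^{k-1}+\mathbf{v}$ and $\mathbf{y}_{c+1}:=(\mathbf{e}^T\mathbf{z}_c)^{-\frac{k-2}{k-1}}\mathbf{z}_c$ (the tensor splitting algorithm). Then the sequence $\{\mathbf{y}_c\}$ converges globally to a nonnegative solution $\mathbf{y}_*$ of the MLPPR system $(\mathbf{e}^T\mathbf{y})^{k-2}\mathbf{y}-\alpha\bar{\mathcal{P}}\mathbf{y}^{k-1}=\mathbf{v}$ with a linear rate, namely $$\|\mathbf{y}_c-\mathbf{y}_*\|_1\le\varsigma^c\|\mathbf{y}_0-\mathbf{y}_*\|_1\quad\text{for all }c\ge0.$$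
   Context: For $\mathcal{P}\in\mathbb{R}^{[k,n]}$ (real tensors of order $k$, dimension $n$) and $\mathbf{y}\in\mathbb{R}^n$, $(\mathcal{P}\mathbf{y}^{k-1})_i=\sum_{i_2,\dots,i_k}p_{i i_2\dots i_k}y_{i_2}\cdots y_{i_k}$. $\bar{\mathcal{P}}$ is columnwise-substochastic if its entries are nonnegative and $\sum_{i}\bar p_{i i_2\dots i_k}\le1$ for all $i_2,\dots,i_k$. $\mathbf{e}$ is the all-ones vector; a stochastic vector is nonnegative with entries summing to $1$. The MLPPR system $(I\circ\mathbf{e}^{\circ(k-2)}-\alpha\bar{\mathcal{P}})\mathbf{y}^{k-1}=\mathbf{v}$ is exactly $(\mathbf{e}^T\mathbf{y})^{k-2}\mathbf{y}-\alpha\bar{\mathcal{P}}\mathbf{y}^{k-1}=\mathbf{v}$. *)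

theory Defs
  imports "HOL-Analysis.Analysis"
begin

text \<open>A real tensor of order k and dimension n is represented with the index type 'n
  (n = CARD('n)): P i [i2,...,ik] is the entry p_{i i2 ... ik}; only lists of length k-1 matter.\<close>

definition tensor_apply :: "('n::finite \<Rightarrow> 'n list \<Rightarrow> real) \<Rightarrow> nat \<Rightarrow> ('n \<Rightarrow> real) \<Rightarrow> 'n \<Rightarrow> real"
  where "tensor_apply P k y i =
    (\<Sum>xs\<in>{xs :: 'n list. length xs = k - 1}. P i xs * prod_list (map y xs))"

definition colwise_substochastic :: "('n::finite \<Rightarrow> 'n list \<Rightarrow> real) \<Rightarrow> nat \<Rightarrow> bool"
  where "colwise_substochastic P k \<longleftrightarrow>
    (\<forall>i xs. length xs = k - 1 \<longrightarrow> 0 \<le> P i xs) \<and>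
    (\<forall>xs. length xs = k - 1 \<longrightarrow> (\<Sum>i\<in>UNIV. P i xs) \<le> 1)"

definition stochastic_vec :: "('n::finite \<Rightarrow> real) \<Rightarrow> bool"
  where "stochastic_vec v \<longleftrightarrow> (\<forall>i. 0 \<le> v i) \<and> (\<Sum>i\<in>UNIV. v i) = 1"

definition esum :: "('n::finite \<Rightarrow> real) \<Rightarrow> real"
  where "esum y = (\<Sum>i\<in>UNIV. y i)"

definition norm1 :: "('n::finite \<Rightarrow> real) \<Rightarrow> real"
  where "norm1 y = (\<Sum>i\<in>UNIV. \<bar>y i\<bar>)"

end

theory Submission
  imports Defs
begin


lemma fin_len: "finite {xs :: 'n::finite list. length xs = m}"
  using finite_lists_length_eq[of "UNIV :: 'n set" m] by simp

lemma sum_len_Suc: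
  "(\<Sum>xs\<in>{xs::'n::finite list. length xs = Suc m}. g xs) =
   (\<Sum>x\<in>UNIV. \<Sum>xs\<in>{xs. length xs = m}. g (x#xs))"
proof -
  have eq: "{xs::'n list. length xs = Suc m} = (\<lambda>(x,xs). x#xs) ` (UNIV \<times> {xs. length xs = m})"
    by (auto simp: length_Suc_conv)
  have inj: "inj_on (\<lambda>(x,xs). x#xs) (UNIV \<times> {xs::'n list. length xs = m})"
    by (auto simp: inj_on_def)
  have "(\<Sum>xs\<in>{xs::'n::finite list. length xs = Suc m}. g xs)
      = (\<Sum>p\<in>UNIV \<times> {xs::'n list. length xs = m}. g ((\<lambda>(x,xs). x#xs) p))"
    unfolding eq by (rule sum.reindex[OF inj, unfolded comp_def])
  also have "\<dots> = (\<Sum>x\<in>UNIV. \<Sum>xs\<in>{xs. length xs = m}. g (x#xs))"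
    by (simp add: sum.cartesian_product case_prod_unfold)
  finally show ?thesis .
qed

lemma sum_prod_pow:
  "(\<Sum>xs\<in>{xs::'n::finite list. length xs = m}. prod_list (map y xs)) = esum y ^ m"
proof (induction m)
  case 0
  have "{xs::'n list. length xs = 0} = {[]}" by auto
  then show ?case by simp
next
  case (Suc m)
  show ?case
    by (simp add: sum_len_Suc sum_distrib_left[symmetric] Suc esum_def sum_distrib_right[symmetric])
qed

lemma prod_nonneg: "\<forall>i. 0 \<le> y i \<Longrightarrow> 0 \<le> prod_list (map (y::'a \<Rightarrow> real) xs)"
  by (induction xs) auto

lemma prod_diff_bound:
  fixes y w :: "'n::finite \<Rightarrow> real"
  assumes y: "\<forall>i. 0 \<le> y i" and w: "\<forall>i. 0 \<le> w i"
    and ey: "esum y \<le> R" and ew: "esum w \<le> R"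
  shows "(\<Sum>xs\<in>{xs::'n list. length xs = m}. \<bar>prod_list (map y xs) - prod_list (map w xs)\<bar>)
     \<le> real m * R ^ (m - 1) * norm1 (\<lambda>i. y i - w i)"
proof (induction m)
  case 0
  have "{xs::'n list. length xs = 0} = {[]}" by auto
  then show ?case by simp
next
  case (Suc m)
  let ?L = "(\<Sum>xs\<in>{xs::'n list. length xs = m}. \<bar>prod_list (map y xs) - prod_list (map w xs)\<bar>)"
  have R0: "0 \<le> R" using ew w by (metis esum_def order.trans sum_nonneg)
  have N0: "0 \<le> norm1 (\<lambda>i. y i - w i)" by (simp add: norm1_def sum_nonneg)
  have "(\<Sum>xs\<in>{xs::'n list. length xs = Suc m}. \<bar>prod_list (map y xs) - prod_list (map w xs)\<bar>)
     = (\<Sum>x\<in>UNIV. \<Sum>xs\<in>{xs. length xs = m}. \<bar>y x * prod_list (map y xs) - w x * prod_list (map w xs)\<bar>)"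
    by (simp add: sum_len_Suc)
  also have "\<dots> \<le> (\<Sum>x\<in>UNIV. \<Sum>xs\<in>{xs. length xs = m}. \<bar>y x - w x\<bar> * prod_list (map y xs) + w x * \<bar>prod_list (map y xs) - prod_list (map w xs)\<bar>)"
  proof (intro sum_mono)
    fix x xs
    have "y x * prod_list (map y xs) - w x * prod_list (map w xs)
        = (y x - w x) * prod_list (map y xs) + w x * (prod_list (map y xs) - prod_list (map w xs))"
      by (simp add: algebra_simps)
    also have "\<bar>\<dots>\<bar> \<le> \<bar>y x - w x\<bar> * prod_list (map y xs) + w x * \<bar>prod_list (map y xs) - prod_list (map w xs)\<bar>"
      using prod_nonneg[OF y, of xs] w abs_triangle_ineq[of "(y x - w x) * prod_list (map y xs)" "w x * (prod_list (map y xs) - prod_list (map w xs))"]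
      by (simp add: abs_mult)
    finally show "\<bar>y x * prod_list (map y xs) - w x * prod_list (map w xs)\<bar> \<le> \<bar>y x - w x\<bar> * prod_list (map y xs) + w x * \<bar>prod_list (map y xs) - prod_list (map w xs)\<bar>" .
  qed
  also have "\<dots> = norm1 (\<lambda>i. y i - w i) * esum y ^ m + esum w * ?L"
    by (simp add: sum.distrib sum_distrib_left[symmetric] sum_distrib_right[symmetric] sum_prod_pow norm1_def esum_def)
  also have "\<dots> \<le> norm1 (\<lambda>i. y i - w i) * R ^ m + R * (real m * R ^ (m - 1) * norm1 (\<lambda>i. y i - w i))"
  proof (rule add_mono)
    show "norm1 (\<lambda>i. y i - w i) * esum y ^ m \<le> norm1 (\<lambda>i. y i - w i) * R ^ m"
      using N0 ey y by (intro mult_left_mono power_mono) (auto simp: esum_def sum_nonneg)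
    have L0: "0 \<le> ?L" by (simp add: sum_nonneg)
    show "esum w * ?L \<le> R * (real m * R ^ (m - 1) * norm1 (\<lambda>i. y i - w i))"
      using mult_mono[OF ew Suc.IH R0 L0] .
  qed
  also have "\<dots> = real (Suc m) * R ^ (Suc m - 1) * norm1 (\<lambda>i. y i - w i)"
    by (cases m) (simp_all add: algebra_simps)
  finally show ?case .
qed

lemma tensor_nonneg:
  assumes P: "colwise_substochastic P k" and y: "\<forall>i. 0 \<le> y i"
  shows "0 \<le> tensor_apply P k y i"
  unfolding tensor_apply_def
  using P prod_nonneg[OF y] by (intro sum_nonneg) (auto simp: colwise_substochastic_def)

lemma tensor_esum:
  fixes P :: "'n::finite \<Rightarrow> 'n list \<Rightarrow> real"
  assumes P: "colwise_substochastic P k" and y: "\<forall>i. 0 \<le> y i"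
  shows "esum (tensor_apply P k y) \<le> esum y ^ (k - 1)"
proof -
  have "esum (tensor_apply P k y) = (\<Sum>xs\<in>{xs::'n list. length xs = k - 1}. (\<Sum>i\<in>UNIV. P i xs) * prod_list (map y xs))"
    unfolding esum_def tensor_apply_def by (simp add: sum.swap[of _ UNIV] sum_distrib_right)
  also have "\<dots> \<le> (\<Sum>xs\<in>{xs::'n list. length xs = k - 1}. prod_list (map y xs))"
    using P prod_nonneg[OF y] by (intro sum_mono) (auto simp: colwise_substochastic_def intro!: mult_left_le_one_le sum_nonneg)
  also have "\<dots> = esum y ^ (k - 1)" by (rule sum_prod_pow)
  finally show ?thesis .
qed

lemma tensor_diff:
  fixes P :: "'n::finite \<Rightarrow> 'n list \<Rightarrow> real"
  assumes P: "colwise_substochastic P k"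
  shows "norm1 (\<lambda>i. tensor_apply P k y i - tensor_apply P k w i) \<le>
    (\<Sum>xs\<in>{xs::'n list. length xs = k - 1}. \<bar>prod_list (map y xs) - prod_list (map w xs)\<bar>)"
proof -
  have P0: "\<And>i xs. xs \<in> {xs::'n list. length xs = k - 1} \<Longrightarrow> 0 \<le> P i xs"
    using P by (auto simp: colwise_substochastic_def)
  have "norm1 (\<lambda>i. tensor_apply P k y i - tensor_apply P k w i)
      = (\<Sum>i\<in>UNIV. \<bar>\<Sum>xs\<in>{xs::'n list. length xs = k - 1}. P i xs * (prod_list (map y xs) - prod_list (map w xs))\<bar>)"
    unfolding norm1_def tensor_apply_def by (simp add: sum_subtractf[symmetric] algebra_simps)
  also have "\<dots> \<le> (\<Sum>i\<in>UNIV. \<Sum>xs\<in>{xs::'n list. length xs = k - 1}. P i xs * \<bar>prod_list (map y xs) - prod_list (map w xs)\<bar>)"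
  proof (intro sum_mono)
    fix i
    show "\<bar>\<Sum>xs\<in>{xs::'n list. length xs = k - 1}. P i xs * (prod_list (map y xs) - prod_list (map w xs))\<bar>
       \<le> (\<Sum>xs\<in>{xs::'n list. length xs = k - 1}. P i xs * \<bar>prod_list (map y xs) - prod_list (map w xs)\<bar>)"
      using sum_abs[of "\<lambda>xs. P i xs * (prod_list (map y xs) - prod_list (map w xs))" "{xs::'n list. length xs = k - 1}"]
        P0 by (simp add: abs_mult)
  qed
  also have "\<dots> = (\<Sum>xs\<in>{xs::'n list. length xs = k - 1}. (\<Sum>i\<in>UNIV. P i xs) * \<bar>prod_list (map y xs) - prod_list (map w xs)\<bar>)"
    by (simp add: sum.swap[of _ UNIV] sum_distrib_right)
  also have "\<dots> \<le> (\<Sum>xs\<in>{xs::'n list. length xs = k - 1}. \<bar>prod_list (map y xs) - prod_list (map w xs)\<bar>)"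
    using P by (intro sum_mono) (auto simp: colwise_substochastic_def intro!: mult_left_le_one_le sum_nonneg)
  finally show ?thesis .
qed

lemma scal_ineq:
  fixes s t b :: real
  assumes "1 \<le> t" "t \<le> s" "0 \<le> b"
  shows "t * (t powr (-b) - s powr (-b)) \<le> b * (s - t)"
proof -
  have t0: "0 < t" using assms by auto
  have q: "1 \<le> s / t" using assms by auto
  have "(s/t) powr (-b) = exp (- b * ln (s/t))" using q t0 assms by (simp add: powr_def)
  also have "\<dots> \<ge> 1 - b * ln (s/t)" using exp_ge_add_one_self[of "- b * ln (s/t)"] by simp
  finally have e1: "(s/t) powr (-b) \<ge> 1 - b * (s/t - 1)"
    using ln_le_minus_one[of "s/t"] q assms(3) mult_left_mono[of "ln (s/t)" "s/t - 1" b] by auto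
  have sp: "s powr (-b) = t powr (-b) * (s/t) powr (-b)"
    using t0 assms by (simp add: powr_divide)
  have tb: "t powr (-b) \<le> 1" using assms by (metis powr_mono powr_zero_eq_one neg_le_0_iff_le order_less_irrefl t0 order.trans zero_le_one)
  have tb0: "0 \<le> t powr (-b)" by simp
  have "t * (t powr (-b) - s powr (-b)) = t * t powr (-b) * (1 - (s/t) powr (-b))"
    by (simp add: sp algebra_simps)
  also have "\<dots> \<le> t * t powr (-b) * (b * (s/t - 1))"
    using e1 t0 tb0 by (intro mult_left_mono) auto
  also have "\<dots> = t powr (-b) * (b * (s - t))" using t0 by (simp add: field_simps)
  also have "\<dots> \<le> b * (s - t)"
    using tb assms by (intro mult_left_le_one_le) auto
  finally show ?thesis .
qed


lemma esum_diff_le: "esum z - esum u \<le> norm1 (\<lambda>i. z i - u i)"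
  unfolding esum_def norm1_def by (simp add: sum_subtractf[symmetric] sum_mono)

lemma norm1_sym: "norm1 (\<lambda>i. z i - u i) = norm1 (\<lambda>i. u i - z i)"
  unfolding norm1_def by (simp add: abs_minus_commute)

lemma normalize_half:
  fixes z u :: "'n::finite \<Rightarrow> real"
  assumes z: "\<forall>i. 0 \<le> z i" and u: "\<forall>i. 0 \<le> u i"
    and t1: "1 \<le> esum u" and ts: "esum u \<le> esum z" and b: "0 \<le> b"
  shows "norm1 (\<lambda>i. esum z powr (-b) * z i - esum u powr (-b) * u i) \<le> (1 + b) * norm1 (\<lambda>i. z i - u i)"
proof -
  let ?s = "esum z" and ?t = "esum u" and ?N = "norm1 (\<lambda>i. z i - u i)"
  have s1: "1 \<le> ?s" using t1 ts by linarith
  have sb: "?s powr (-b) \<le> 1"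
    using powr_mono2'[of "-b" 1 ?s] s1 b by simp
  have dd: "0 \<le> ?t powr (-b) - ?s powr (-b)"
    using powr_mono2'[of "-b" ?t ?s] b t1 ts by auto
  have "norm1 (\<lambda>i. ?s powr (-b) * z i - ?t powr (-b) * u i)
     \<le> (\<Sum>i\<in>UNIV. ?s powr (-b) * \<bar>z i - u i\<bar> + (?t powr (-b) - ?s powr (-b)) * u i)"
    unfolding norm1_def
  proof (intro sum_mono)
    fix i
    have "?s powr (-b) * z i - ?t powr (-b) * u i = ?s powr (-b) * (z i - u i) - (?t powr (-b) - ?s powr (-b)) * u i"
      by (simp add: algebra_simps)
    also have "\<bar>\<dots>\<bar> \<le> ?s powr (-b) * \<bar>z i - u i\<bar> + (?t powr (-b) - ?s powr (-b)) * u i"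
      using abs_triangle_ineq4[of "?s powr (-b) * (z i - u i)" "(?t powr (-b) - ?s powr (-b)) * u i"] dd u
      by (simp add: abs_mult)
    finally show "\<bar>?s powr (-b) * z i - ?t powr (-b) * u i\<bar> \<le> ?s powr (-b) * \<bar>z i - u i\<bar> + (?t powr (-b) - ?s powr (-b)) * u i" .
  qed
  also have "\<dots> = ?s powr (-b) * ?N + ?t * (?t powr (-b) - ?s powr (-b))"
    unfolding norm1_def esum_def by (simp add: sum.distrib sum_distrib_left[symmetric] sum_distrib_right[symmetric] mult.commute)
  also have "\<dots> \<le> 1 * ?N + b * (?s - ?t)"
  proof (rule add_mono)
    show "?s powr (-b) * ?N \<le> 1 * ?N" by (rule mult_right_mono[OF sb]) (simp add: norm1_def sum_nonneg)
    show "?t * (?t powr (-b) - ?s powr (-b)) \<le> b * (?s - ?t)" by (rule scal_ineq[OF t1 ts b])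
  qed
  also have "\<dots> \<le> ?N + b * ?N"
    using esum_diff_le[of z u] b by (simp add: mult_left_mono)
  finally show ?thesis by (simp add: algebra_simps)
qed

lemma normalize_lip:
  fixes z u :: "'n::finite \<Rightarrow> real"
  assumes z: "\<forall>i. 0 \<le> z i" and u: "\<forall>i. 0 \<le> u i"
    and s1: "1 \<le> esum z" and t1: "1 \<le> esum u" and b: "0 \<le> b"
  shows "norm1 (\<lambda>i. esum z powr (-b) * z i - esum u powr (-b) * u i) \<le> (1 + b) * norm1 (\<lambda>i. z i - u i)"
proof (cases "esum u \<le> esum z")
  case True
  then show ?thesis using normalize_half[OF z u t1 True b] by simp
next
  case False
  then show ?thesis using normalize_half[OF u z s1 _ b] norm1_sym[of z u]
    norm1_sym[of "\<lambda>i. esum z powr (-b) * z i" "\<lambda>i. esum u powr (-b) * u i"] by simp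
qed



definition zmap :: "('n::finite \<Rightarrow> 'n list \<Rightarrow> real) \<Rightarrow> nat \<Rightarrow> real \<Rightarrow> ('n \<Rightarrow> real) \<Rightarrow> ('n \<Rightarrow> real) \<Rightarrow> 'n \<Rightarrow> real"
  where "zmap P k a v y = (\<lambda>i. a * tensor_apply P k y i + v i)"

definition Tmap :: "('n::finite \<Rightarrow> 'n list \<Rightarrow> real) \<Rightarrow> nat \<Rightarrow> real \<Rightarrow> ('n \<Rightarrow> real) \<Rightarrow> ('n \<Rightarrow> real) \<Rightarrow> 'n \<Rightarrow> real"
  where "Tmap P k a v y = (\<lambda>i. esum (zmap P k a v y) powr (- ((real k - 2) / (real k - 1))) * zmap P k a v y i)"

lemma z_props:
  fixes P :: "'n::finite \<Rightarrow> 'n list \<Rightarrow> real"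
  assumes k: "k \<ge> 2" and P: "colwise_substochastic P k" and v: "stochastic_vec v"
    and a: "0 \<le> a" "a < 1" and y: "\<forall>i. 0 \<le> y i"
    and ey: "esum y \<le> (1 - a) powr (- (1 / (real k - 1)))"
  shows "\<forall>i. 0 \<le> zmap P k a v y i" "1 \<le> esum (zmap P k a v y)" "esum (zmap P k a v y) \<le> 1 / (1 - a)"
proof -
  show "\<forall>i. 0 \<le> zmap P k a v y i"
    using tensor_nonneg[OF P y] v a by (simp add: zmap_def stochastic_vec_def)
  have ez: "esum (zmap P k a v y) = a * esum (tensor_apply P k y) + 1"
    using v by (simp add: zmap_def esum_def stochastic_vec_def sum.distrib sum_distrib_left)
  have e0: "0 \<le> esum (tensor_apply P k y)"
    using tensor_nonneg[OF P y] by (simp add: esum_def sum_nonneg)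
  show "1 \<le> esum (zmap P k a v y)" using ez e0 a by simp
  have y0: "0 \<le> esum y" using y by (simp add: esum_def sum_nonneg)
  have kk: "real (k - 1) = real k - 1" using k by simp
  have Rp: "((1 - a) powr (- (1 / (real k - 1)))) ^ (k - 1) = 1 / (1 - a)"
  proof -
    have "((1 - a) powr (- (1 / (real k - 1)))) ^ (k - 1) = (1 - a) powr (real (k - 1) * (- (1 / (real k - 1))))"
      using a by (intro powr_power) simp
    also have "real (k - 1) * (- (1 / (real k - 1))) = -1" using k by (simp add: kk)
    also have "(1 - a) powr (-1) = 1 / (1 - a)" using a by (simp add: powr_minus divide_inverse)
    finally show ?thesis .
  qed
  have "esum (tensor_apply P k y) \<le> esum y ^ (k - 1)" by (rule tensor_esum[OF P y])
  also have "\<dots> \<le> 1 / (1 - a)" unfolding Rp[symmetric] by (rule power_mono[OF ey y0])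
  finally have t: "esum (tensor_apply P k y) \<le> 1 / (1 - a)" .
  have "a * esum (tensor_apply P k y) \<le> a * (1 / (1 - a))" by (rule mult_left_mono[OF t a(1)])
  then show "esum (zmap P k a v y) \<le> 1 / (1 - a)" using ez a by (simp add: field_simps)
qed

lemma T_in_D:
  fixes P :: "'n::finite \<Rightarrow> 'n list \<Rightarrow> real"
  assumes k: "k \<ge> 2" and P: "colwise_substochastic P k" and v: "stochastic_vec v"
    and a: "0 \<le> a" "a < 1" and y: "\<forall>i. 0 \<le> y i"
    and ey: "esum y \<le> (1 - a) powr (- (1 / (real k - 1)))"
  shows "\<forall>i. 0 \<le> Tmap P k a v y i" "esum (Tmap P k a v y) \<le> (1 - a) powr (- (1 / (real k - 1)))"
proof -
  note zp = z_props[OF k P v a y ey]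
  show "\<forall>i. 0 \<le> Tmap P k a v y i" using zp by (simp add: Tmap_def)
  let ?s = "esum (zmap P k a v y)"
  have s0: "0 < ?s" using zp by linarith
  have "esum (Tmap P k a v y) = ?s powr (- ((real k - 2) / (real k - 1))) * ?s"
    by (simp add: Tmap_def esum_def sum_distrib_left)
  also have "\<dots> = ?s powr (1 / (real k - 1))"
  proof -
    have "?s powr (- ((real k - 2) / (real k - 1))) * ?s = ?s powr (- ((real k - 2) / (real k - 1)) + 1)"
      using s0 powr_add[of ?s "- ((real k - 2) / (real k - 1))" 1] by simp
    also have "- ((real k - 2) / (real k - 1)) + 1 = 1 / (real k - 1)" using k by (simp add: field_simps)
    finally show ?thesis .
  qed
  also have "\<dots> \<le> (1 / (1 - a)) powr (1 / (real k - 1))"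
    using zp s0 k by (intro powr_mono2) auto
  also have "\<dots> = (1 - a) powr (- (1 / (real k - 1)))"
    by (subst powr_divide) (use a in \<open>auto simp: powr_minus_divide\<close>)
  finally show "esum (Tmap P k a v y) \<le> (1 - a) powr (- (1 / (real k - 1)))" .
qed

lemma T_contr:
  fixes P :: "'n::finite \<Rightarrow> 'n list \<Rightarrow> real"
  assumes k: "k \<ge> 2" and P: "colwise_substochastic P k" and v: "stochastic_vec v"
    and a: "0 \<le> a" "a < 1" and y: "\<forall>i. 0 \<le> y i"
    and ey: "esum y \<le> (1 - a) powr (- (1 / (real k - 1)))"
    and w: "\<forall>i. 0 \<le> w i"
    and ew: "esum w \<le> (1 - a) powr (- (1 / (real k - 1)))"
  shows "norm1 (\<lambda>i. Tmap P k a v y i - Tmap P k a v w i) \<le>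
    ((2 * real k - 3) * a * (1 - a) powr (- ((real k - 2) / (real k - 1)))) * norm1 (\<lambda>i. y i - w i)"
proof -
  let ?R = "(1 - a) powr (- (1 / (real k - 1)))"
  let ?b = "(real k - 2) / (real k - 1)"
  note zy = z_props[OF k P v a y ey] and zw = z_props[OF k P v a w ew]
  have b0: "0 \<le> ?b" using k by simp
  have N0: "0 \<le> norm1 (\<lambda>i. y i - w i)" by (simp add: norm1_def sum_nonneg)
  have "norm1 (\<lambda>i. Tmap P k a v y i - Tmap P k a v w i) \<le> (1 + ?b) * norm1 (\<lambda>i. zmap P k a v y i - zmap P k a v w i)"
    unfolding Tmap_def by (rule normalize_lip[OF zy(1) zw(1) zy(2) zw(2) b0])
  also have "norm1 (\<lambda>i. zmap P k a v y i - zmap P k a v w i) = a * norm1 (\<lambda>i. tensor_apply P k y i - tensor_apply P k w i)"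
    using a by (simp add: zmap_def norm1_def sum_distrib_left abs_mult right_diff_distrib[symmetric])
  also have "\<dots> \<le> a * (real (k - 1) * ?R ^ (k - 1 - 1) * norm1 (\<lambda>i. y i - w i))"
    using a order.trans[OF tensor_diff[OF P, of y w] prod_diff_bound[OF y w ey ew, of "k - 1"]]
    by (simp add: mult_left_mono)
  finally have 1: "norm1 (\<lambda>i. Tmap P k a v y i - Tmap P k a v w i) \<le> (1 + ?b) * (a * (real (k - 1) * ?R ^ (k - 1 - 1) * norm1 (\<lambda>i. y i - w i)))"
    using b0 by (simp add: mult_left_mono)
  have kk: "real (k - 1) = real k - 1" "real (k - 1 - 1) = real k - 2" using k by auto
  have Rp: "?R ^ (k - 1 - 1) = (1 - a) powr (- ?b)"
    using a k by (simp add: powr_power kk)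
  have c: "(1 + ?b) * real (k - 1) = 2 * real k - 3" using k by (simp add: kk field_simps)
  have "(1 + ?b) * (a * (real (k - 1) * ?R ^ (k - 1 - 1) * norm1 (\<lambda>i. y i - w i)))
      = ((1 + ?b) * real (k - 1)) * a * ?R ^ (k - 1 - 1) * norm1 (\<lambda>i. y i - w i)"
    by (simp add: algebra_simps)
  also have "\<dots> = ((2 * real k - 3) * a * (1 - a) powr (- ?b)) * norm1 (\<lambda>i. y i - w i)"
    unfolding c Rp ..
  finally have e: "(1 + ?b) * (a * (real (k - 1) * ?R ^ (k - 1 - 1) * norm1 (\<lambda>i. y i - w i)))
      = ((2 * real k - 3) * a * (1 - a) powr (- ?b)) * norm1 (\<lambda>i. y i - w i)" .
  show ?thesis using 1 e by (rule ord_le_eq_trans)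
qed



lemma abs_le_norm1: "\<bar>f i\<bar> \<le> norm1 (f :: 'n::finite \<Rightarrow> real)"
  unfolding norm1_def by (rule member_le_sum) auto

theorem theorem4p2:
  fixes P :: "'n::finite \<Rightarrow> 'n list \<Rightarrow> real"
    and v :: "'n \<Rightarrow> real"
    and y :: "nat \<Rightarrow> 'n \<Rightarrow> real"
    and k :: nat and \<alpha> :: real
  assumes k: "k \<ge> 2"
    and P: "colwise_substochastic P k"
    and v: "stochastic_vec v"
    and alpha: "0 \<le> \<alpha>" "\<alpha> < 1"
    and varsigma: "(2 * real k - 3) * \<alpha> * (1 - \<alpha>) powr (- ((real k - 2) / (real k - 1))) < 1"
    and y0_nonneg: "\<forall>i. 0 \<le> y 0 i"
    and y0_sum: "esum (y 0) \<le> (1 - \<alpha>) powr (- (1 / (real k - 1)))"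
    and iter: "\<And>c. y (Suc c) =
       (let z = (\<lambda>i. \<alpha> * tensor_apply P k (y c) i + v i)
        in (\<lambda>i. esum z powr (- ((real k - 2) / (real k - 1))) * z i))"
  shows "\<exists>ys :: 'n \<Rightarrow> real.
     (\<forall>i. 0 \<le> ys i) \<and>
     (\<forall>i. esum ys ^ (k - 2) * ys i - \<alpha> * tensor_apply P k ys i = v i) \<and>
     (\<forall>i. (\<lambda>c. y c i) \<longlonglongrightarrow> ys i) \<and>
     (\<forall>c. norm1 (\<lambda>i. y c i - ys i) \<le>
        ((2 * real k - 3) * \<alpha> * (1 - \<alpha>) powr (- ((real k - 2) / (real k - 1)))) ^ c
          * norm1 (\<lambda>i. y 0 i - ys i))"
proof -
  define T where "T = Tmap P k \<alpha> v"
  define R where "R = (1 - \<alpha>) powr (- (1 / (real k - 1)))"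
  define q where "q = (2 * real k - 3) * \<alpha> * (1 - \<alpha>) powr (- ((real k - 2) / (real k - 1)))"
  have yS: "\<And>c. y (Suc c) = T (y c)"
    unfolding T_def Tmap_def zmap_def by (subst iter) (simp add: Let_def)
  have Dy: "(\<forall>i. 0 \<le> y c i) \<and> esum (y c) \<le> R" for c
  proof (induction c)
    case 0
    then show ?case using y0_nonneg y0_sum R_def by simp
  next
    case (Suc c)
    then show ?case unfolding yS T_def R_def using T_in_D[OF k P v alpha] by blast
  qed
  have contr: "\<And>u w. (\<forall>i. 0 \<le> u i) \<Longrightarrow> esum u \<le> R \<Longrightarrow> (\<forall>i. 0 \<le> w i) \<Longrightarrow> esum w \<le> R
      \<Longrightarrow> norm1 (\<lambda>i. T u i - T w i) \<le> q * norm1 (\<lambda>i. u i - w i)"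
    using T_contr[OF k P v alpha] unfolding T_def R_def q_def by blast
  have q0: "0 \<le> q" unfolding q_def using k alpha by simp
  have q1: "q < 1" using varsigma q_def by simp
  define d where "d = norm1 (\<lambda>i. y 1 i - y 0 i)"
  have step: "norm1 (\<lambda>i. y (Suc c) i - y c i) \<le> q ^ c * d" for c
  proof (induction c)
    case 0
    then show ?case by (simp add: d_def)
  next
    case (Suc c)
    have "norm1 (\<lambda>i. y (Suc (Suc c)) i - y (Suc c) i) \<le> q * norm1 (\<lambda>i. y (Suc c) i - y c i)"
      unfolding yS[of "Suc c"] unfolding yS[of c] using contr Dy yS by metis
    also have "\<dots> \<le> q * (q ^ c * d)" using Suc q0 by (simp add: mult_left_mono)
    finally show ?case by simp
  qed
  have comp: "\<bar>y (Suc c) i - y c i\<bar> \<le> q ^ c * d" for c i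
    using abs_le_norm1[of "\<lambda>i. y (Suc c) i - y c i" i] step[of c] by simp
  have summ: "summable (\<lambda>c. y (Suc c) i - y c i)" for i
  proof (rule summable_comparison_test)
    show "\<exists>N. \<forall>n\<ge>N. norm (y (Suc n) i - y n i) \<le> q ^ n * d" using comp by auto
    show "summable (\<lambda>n. q ^ n * d)" using q0 q1 by (intro summable_mult2 summable_geometric) simp
  qed
  define ys where "ys i = y 0 i + (\<Sum>c. y (Suc c) i - y c i)" for i
  have lim: "(\<lambda>c. y c i) \<longlonglongrightarrow> ys i" for i
  proof -
    have "(\<lambda>c. y 0 i + (\<Sum>j<c. y (Suc j) i - y j i)) \<longlonglongrightarrow> ys i"
      unfolding ys_def by (intro tendsto_add tendsto_const summable_LIMSEQ summ)
    moreover have "(\<lambda>c. y 0 i + (\<Sum>j<c. y (Suc j) i - y j i)) = (\<lambda>c. y c i)"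
      using sum_lessThan_telescope[of "\<lambda>j. y j i"] by simp
    ultimately show ?thesis by simp
  qed
  have ys0: "\<forall>i. 0 \<le> ys i"
    using Dy lim by (meson LIMSEQ_le_const)
  have esl: "(\<lambda>c. esum (y c)) \<longlonglongrightarrow> esum ys"
    unfolding esum_def by (intro tendsto_sum lim)
  have ysR: "esum ys \<le> R"
    using esl Dy by (meson LIMSEQ_le_const2)
  have nl: "(\<lambda>c. norm1 (\<lambda>i. y c i - ys i)) \<longlonglongrightarrow> 0"
  proof -
    have "(\<lambda>c. norm1 (\<lambda>i. y c i - ys i)) \<longlonglongrightarrow> (\<Sum>i\<in>UNIV. \<bar>ys i - ys i\<bar>)"
      unfolding norm1_def by (intro tendsto_sum tendsto_rabs tendsto_diff lim tendsto_const)
    then show ?thesis by simp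
  qed
  have fixT: "T ys = ys"
  proof
    fix i
    have "(\<lambda>c. y (Suc c) i - T ys i) \<longlonglongrightarrow> 0"
    proof (rule Lim_null_comparison)
      show "\<forall>\<^sub>F c in sequentially. norm (y (Suc c) i - T ys i) \<le> q * norm1 (\<lambda>i. y c i - ys i)"
      proof (rule always_eventually, rule allI)
        fix c
        have "norm (y (Suc c) i - T ys i) \<le> norm1 (\<lambda>i. T (y c) i - T ys i)"
          using abs_le_norm1[of "\<lambda>i. T (y c) i - T ys i" i] yS by simp
        also have "\<dots> \<le> q * norm1 (\<lambda>i. y c i - ys i)" using contr Dy ys0 ysR by blast
        finally show "norm (y (Suc c) i - T ys i) \<le> q * norm1 (\<lambda>i. y c i - ys i)" .
      qed
      show "(\<lambda>c. q * norm1 (\<lambda>i. y c i - ys i)) \<longlonglongrightarrow> 0"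
        using tendsto_mult_right_zero[OF nl] by simp
    qed
    then have "(\<lambda>c. y (Suc c) i) \<longlonglongrightarrow> T ys i" by (simp add: LIM_zero_iff)
    moreover have "(\<lambda>c. y (Suc c) i) \<longlonglongrightarrow> ys i" using LIMSEQ_Suc[OF lim] .
    ultimately show "T ys i = ys i" using LIMSEQ_unique by blast
  qed
  have rate: "norm1 (\<lambda>i. y c i - ys i) \<le> q ^ c * norm1 (\<lambda>i. y 0 i - ys i)" for c
  proof (induction c)
    case 0
    then show ?case by simp
  next
    case (Suc c)
    have "norm1 (\<lambda>i. y (Suc c) i - ys i) = norm1 (\<lambda>i. T (y c) i - T ys i)" using yS fixT by simp
    also have "\<dots> \<le> q * norm1 (\<lambda>i. y c i - ys i)" using contr Dy ys0 ysR by blast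
    also have "\<dots> \<le> q * (q ^ c * norm1 (\<lambda>i. y 0 i - ys i))" using Suc q0 by (simp add: mult_left_mono)
    finally show ?case by simp
  qed
  have eq: "esum ys ^ (k - 2) * ys i - \<alpha> * tensor_apply P k ys i = v i" for i
  proof -
    let ?z = "zmap P k \<alpha> v ys"
    let ?s = "esum ?z"
    let ?b = "(real k - 2) / (real k - 1)"
    have s1: "1 \<le> ?s" using z_props(2)[OF k P v alpha ys0 ysR[unfolded R_def]] .
    have s0: "0 < ?s" using s1 by simp
    have yse: "ys = (\<lambda>i. ?s powr (- ?b) * ?z i)" using fixT unfolding T_def Tmap_def by simp
    have "esum ys = ?s powr (- ?b) * ?s" by (subst yse) (simp add: esum_def sum_distrib_left)
    also have "\<dots> = ?s powr (- ?b + 1)" using s0 powr_add[of ?s "- ?b" 1] by simp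
    also have "- ?b + 1 = 1 / (real k - 1)" using k by (simp add: field_simps)
    finally have es: "esum ys = ?s powr (1 / (real k - 1))" .
    have "esum ys ^ (k - 2) = ?s powr (real (k - 2) * (1 / (real k - 1)))"
      unfolding es using s0 by (intro powr_power) simp
    also have "real (k - 2) * (1 / (real k - 1)) = ?b" using k by simp
    finally have ek: "esum ys ^ (k - 2) = ?s powr ?b" .
    have "esum ys ^ (k - 2) * ys i = ?s powr ?b * ?s powr (- ?b) * ?z i"
      by (subst (2) yse) (simp add: ek)
    also have "?s powr ?b * ?s powr (- ?b) = 1" using s0 by (simp add: powr_add[symmetric])
    finally show ?thesis by (simp add: zmap_def)
  qed
  show ?thesis
    using ys0 eq lim rate unfolding q_def by blast
qed

end
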